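(* Let $k\ge1$ and $n\ge0$. The map $\psi$ from $\mathcal{A}^k_n$ to the set $\overline{\mathcal{Q}}^k_n$ of $k$-quasi-Stirling permutations of size $n$, defined recursively by letting $\psi$ of a tree consisting of a single leaf be the empty sequence, and, for a tree whose root is an internal vertex with label $b$ and whose root subtrees from left to right are $S_1,\dots,S_k$, $$\psi(T)=\psi(S_1)\,b\,\psi(S_2)\,b\cdots\psi(S_k)\,b$$ (i.e. a left-to-right depth-first walk recording the label of a vertex each time the walk returns to it from a child), is well defined (its values lie in $\overline{\mathcal{Q}}^k_n$) and is a bijection $\mathcal{A}^k_n\to\overline{\mathcal{Q}}^k_n$.
   Context: A $k$-ary tree is a plane (ordered) rooted tree in which every vertex has either $0$ or $k$ children; vertices with $k$ children are internal. $\mathcal{A}^k_n$ is the set of $k$-ary trees with $n$ internal vertices whose internal vertices are labeled bijectively by $\{1,\dots,n\}$ (leaves are unlabeled). A $k$-quasi-Stirling permutation of size $n$ is a permutation $\pi$ of the multiset $\{1^k,2^k,\dots,n^k\}$ (each of $1,\dots,n$ appearing $k$ times) that avoids $1212$ and $2121$, i.e. there are no indices $i<j<k'<\ell$ with $\pi_i=\pi_{k'}\neq\pi_j=\pi_\ell$. *)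

theory Defs
  imports Main "HOL-Library.Multiset"
begin

datatype ktree = Leaf | Node nat "ktree list"

fun is_kary :: "nat \<Rightarrow> ktree \<Rightarrow> bool" where
  "is_kary k Leaf = True"
| "is_kary k (Node b ts) = (length ts = k \<and> (\<forall>t\<in>set ts. is_kary k t))"

fun labels :: "ktree \<Rightarrow> nat list" where
  "labels Leaf = []"
| "labels (Node b ts) = b # concat (map labels ts)"

definition labeled_kary_trees :: "nat \<Rightarrow> nat \<Rightarrow> ktree set" where
  "labeled_kary_trees k n =
     {T. is_kary k T \<and> distinct (labels T) \<and> set (labels T) = {1..n}}"

definition quasi_stirling :: "nat \<Rightarrow> nat \<Rightarrow> nat list set" where
  "quasi_stirling k n =
     {w. (\<forall>a. count (mset w) a = (if 1 \<le> a \<and> a \<le> n then k else 0)) \<and>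
         \<not> (\<exists>i j l m. i < j \<and> j < l \<and> l < m \<and> m < length w \<and>
                w ! i = w ! l \<and> w ! j = w ! m \<and> w ! i \<noteq> w ! j)}"

fun psi :: "ktree \<Rightarrow> nat list" where
  "psi Leaf = []"
| "psi (Node b ts) = concat (map (\<lambda>t. psi t @ [b]) ts)"

end

theory Submission
  imports Defs "HOL-Library.Sublist"
begin

definition avoid :: "nat list \<Rightarrow> bool" where
  "avoid w = (\<forall>a c. a \<noteq> c \<longrightarrow> \<not> subseq [a,c,a,c] w)"

lemma subseq_set: "subseq xs ys \<Longrightarrow> set xs \<subseteq> set ys"
  by (induct rule: list_emb.induct) auto

lemma avoid_sub: "subseq v w \<Longrightarrow> avoid w \<Longrightarrow> avoid v"
  unfolding avoid_def using subseq_order.order_trans by blast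

lemma avoid_appendD: "avoid (xs @ ys) \<Longrightarrow> avoid xs \<and> avoid ys"
  using avoid_sub by (metis subseq_drop_many subseq_rev_drop_many subseq_order.order_refl)

lemma avoid_single: "avoid [b]"
  unfolding avoid_def by (auto dest: list_emb_length)

lemma avoid_Nil: "avoid []"
  unfolding avoid_def by auto

lemma avoid_append_disj:
  assumes "set xs \<inter> set ys = {}" "avoid xs" "avoid ys"
  shows "avoid (xs @ ys)"
  unfolding avoid_def
proof (intro allI impI notI)
  fix a c :: nat assume ac: "a \<noteq> c" and s: "subseq [a,c,a,c] (xs @ ys)"
  then obtain p q where pq: "[a,c,a,c] = p @ q" "subseq p xs" "subseq q ys"
    by (auto elim: subseq_appendE)
  have "p = [] \<or> p = [a] \<or> p = [a,c] \<or> p = [a,c,a] \<or> p = [a,c,a,c]"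
    using pq(1) by (auto simp: Cons_eq_append_conv)
  then show False
  proof (elim disjE)
    assume "p = []" then show False using pq assms(3) ac unfolding avoid_def by auto
  next
    assume "p = [a]" then have "q = [c,a,c]" using pq by auto
    then show False using pq \<open>p = [a]\<close> assms(1) by (auto dest!: subseq_set)
  next
    assume "p = [a,c]" then have "q = [a,c]" using pq by auto
    then show False using pq \<open>p = [a,c]\<close> assms(1) by (auto dest!: subseq_set)
  next
    assume "p = [a,c,a]" then have "q = [c]" using pq by auto
    then show False using pq \<open>p = [a,c,a]\<close> assms(1) by (auto dest!: subseq_set)
  next
    assume "p = [a,c,a,c]" then show False using pq assms(2) ac unfolding avoid_def by auto
  qed
qed

lemma subseq_drop_Cons:
  "subseq (x#xs) (drop n w) \<longleftrightarrow> (\<exists>i. n \<le> i \<and> i < length w \<and> w!i = x \<and> subseq xs (drop (Suc i) w))"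
proof (induct w arbitrary: n)
  case Nil then show ?case by simp
next
  case (Cons y ys)
  show ?case
  proof (cases n)
    case 0
    have "subseq (x#xs) (y#ys) \<longleftrightarrow> (x = y \<and> subseq xs ys) \<or> subseq (x#xs) ys"
      by (cases "x = y") (auto dest: subseq_Cons')
    also have "\<dots> \<longleftrightarrow> (\<exists>i. 0 \<le> i \<and> i < length (y#ys) \<and> (y#ys)!i = x \<and> subseq xs (drop (Suc i) (y#ys)))"
      using Cons[of 0] apply simp
      apply (rule iffI)
       apply (metis Suc_less_eq drop_Suc_Cons length_greater_0_conv list.size(3) not_less_zero nth_Cons_0 nth_Cons_Suc drop0 zero_less_Suc)
      by (metis drop0 drop_Suc_Cons less_Suc_eq_0_disj nth_Cons_0 nth_Cons_Suc)
    finally show ?thesis using 0 by simp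
  next
    case (Suc m)
    have "subseq (x#xs) (drop n (y#ys)) \<longleftrightarrow> subseq (x#xs) (drop m ys)" using Suc by simp
    also have "\<dots> \<longleftrightarrow> (\<exists>i. m \<le> i \<and> i < length ys \<and> ys!i = x \<and> subseq xs (drop (Suc i) ys))"
      by (rule Cons)
    also have "\<dots> \<longleftrightarrow> (\<exists>i. n \<le> i \<and> i < length (y#ys) \<and> (y#ys)!i = x \<and> subseq xs (drop (Suc i) (y#ys)))"
    proof
      assume "\<exists>i. m \<le> i \<and> i < length ys \<and> ys!i = x \<and> subseq xs (drop (Suc i) ys)"
      then obtain i where "m \<le> i \<and> i < length ys \<and> ys!i = x \<and> subseq xs (drop (Suc i) ys)" by blast
      then show "\<exists>i. n \<le> i \<and> i < length (y#ys) \<and> (y#ys)!i = x \<and> subseq xs (drop (Suc i) (y#ys))"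
        using Suc by (intro exI[of _ "Suc i"]) auto
    next
      assume "\<exists>i. n \<le> i \<and> i < length (y#ys) \<and> (y#ys)!i = x \<and> subseq xs (drop (Suc i) (y#ys))"
      then obtain i where "n \<le> i \<and> i < length (y#ys) \<and> (y#ys)!i = x \<and> subseq xs (drop (Suc i) (y#ys))" by blast
      then show "\<exists>i. m \<le> i \<and> i < length ys \<and> ys!i = x \<and> subseq xs (drop (Suc i) ys)"
        using Suc by (intro exI[of _ "i - 1"]) (cases i, auto)
    qed
    finally show ?thesis .
  qed
qed

lemma avoid_idx:
  "avoid w \<longleftrightarrow> \<not> (\<exists>i j l m. i < j \<and> j < l \<and> l < m \<and> m < length w \<and>
                w ! i = w ! l \<and> w ! j = w ! m \<and> w ! i \<noteq> w ! j)"
proof -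
  have e: "subseq xs w = subseq xs (drop 0 w)" for xs by simp
  show ?thesis unfolding avoid_def
    apply (subst e) apply (simp only: subseq_drop_Cons list_emb_Nil simp_thms)
    apply (rule iffI)
    subgoal
    proof (intro notI, elim exE conjE)
      fix i j l m assume H: "\<forall>a c. a \<noteq> c \<longrightarrow> \<not> (\<exists>i\<ge>0. i < length w \<and> w ! i = a \<and>
                    (\<exists>ia\<ge>Suc i. ia < length w \<and> w ! ia = c \<and>
                        (\<exists>i\<ge>Suc ia. i < length w \<and> w ! i = a \<and>
                            (\<exists>ia\<ge>Suc i. ia < length w \<and> w ! ia = c))))"
        and h: "i < j" "j < l" "l < m" "m < length w" "w ! i = w ! l" "w ! j = w ! m" "w ! i \<noteq> w ! j"
      define a where "a = w!i"
      define c where "c = w!j"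
      have ac: "a \<noteq> c" using h(7) by (simp add: a_def c_def)
      have "\<exists>i'\<ge>0. i' < length w \<and> w ! i' = a \<and>
                    (\<exists>ia\<ge>Suc i'. ia < length w \<and> w ! ia = c \<and>
                        (\<exists>i\<ge>Suc ia. i < length w \<and> w ! i = a \<and>
                            (\<exists>ia\<ge>Suc i. ia < length w \<and> w ! ia = c)))"
        apply (rule exI[of _ i]) apply (intro conjI) using h apply (simp_all add: a_def c_def)
        apply (rule exI[of _ j]) apply (intro conjI) using h apply simp_all
        apply (rule exI[of _ l]) apply (intro conjI) using h apply simp_all
        apply (rule exI[of _ m]) using h by simp
      then show False by (rule notE[OF H[rule_format, OF ac]])
    qed
    subgoal
    proof (intro allI impI notI, elim exE conjE)
      fix a c i j l m
      assume H: "\<nexists>i j l m. i < j \<and> j < l \<and> l < m \<and> m < length w \<and> w ! i = w ! l \<and> w ! j = w ! m \<and> w ! i \<noteq> w ! j"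
        and h: "a \<noteq> c" "0 \<le> i" "i < length w" "w!i = a" "Suc i \<le> j" "j < length w" "w!j = c"
         "Suc j \<le> l" "l < length w" "w!l = a" "Suc l \<le> m" "m < length w" "w!m = c"
      have "\<exists>i j l m. i < j \<and> j < l \<and> l < m \<and> m < length w \<and> w ! i = w ! l \<and> w ! j = w ! m \<and> w ! i \<noteq> w ! j"
        apply (rule exI[of _ i], rule exI[of _ j], rule exI[of _ l], rule exI[of _ m]) using h by simp
      then show False by (rule notE[OF H])
    qed
    done
qed


lemma set_psi: "set (psi T) \<subseteq> set (labels T)"
  by (induct T rule: psi.induct) auto

lemma count_psi_list:
  assumes "\<forall>t\<in>set ts. count (mset (psi t)) a = k * count (mset (labels t)) a"
  shows "count (mset (concat (map (\<lambda>t. psi t @ [b]) ts))) a =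
    k * count (mset (concat (map labels ts))) a + (if a = b then length ts else 0)"
  using assms by (induct ts) (auto simp: algebra_simps)

lemma count_psi: "is_kary k T \<Longrightarrow> count (mset (psi T)) a = k * count (mset (labels T)) a"
proof (induct T)
  case Leaf then show ?case by simp
next
  case (Node b ts)
  then have "\<forall>t\<in>set ts. count (mset (psi t)) a = k * count (mset (labels t)) a" by auto
  from count_psi_list[OF this, of b] Node.prems show ?case by (simp add: algebra_simps)
qed

lemma psi_avoid_list:
  assumes "\<forall>t\<in>set ts. avoid (psi t)" "distinct (concat (map labels ts))"
    "b \<notin> set (concat (map labels ts))"
  shows "avoid (b # concat (map (\<lambda>t. psi t @ [b]) ts)) \<and>
     (\<forall>c. c \<noteq> b \<longrightarrow> \<not> subseq [c,b,c] (b # concat (map (\<lambda>t. psi t @ [b]) ts)))"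
  using assms
proof (induct ts)
  case Nil
  then show ?case by (auto simp: avoid_single dest: list_emb_length)
next
  case (Cons t ts)
  define u where "u = psi t"
  define G where "G = b # concat (map (\<lambda>t. psi t @ [b]) ts)"
  have IH: "avoid G" "\<And>c. c \<noteq> b \<Longrightarrow> \<not> subseq [c,b,c] G" using Cons unfolding G_def by auto
  have setG: "set G \<subseteq> insert b (set (concat (map labels ts)))"
  proof
    fix x assume "x \<in> set G"
    then have "x = b \<or> (\<exists>t\<in>set ts. x \<in> set (psi t))" unfolding G_def by (auto split: if_splits)
    then show "x \<in> insert b (set (concat (map labels ts)))" using set_psi by fastforce
  qed
  have bu: "b \<notin> set u" using Cons.prems(3) set_psi[of t] unfolding u_def by auto
  have disj: "x \<in> set u \<Longrightarrow> x \<notin> set G" for x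
    using setG bu Cons.prems(2) set_psi[of t] unfolding u_def by auto
  have au: "avoid u" using Cons.prems(1) unfolding u_def by auto
  have abu: "avoid (b # u)" using avoid_append_disj[of "[b]" u] bu au avoid_single by auto
  have eq: "b # concat (map (\<lambda>t. psi t @ [b]) (t#ts)) = (b # u) @ G"
    unfolding u_def G_def by simp
  have nb: "\<not> subseq [c,b,c] (b#u)" if "c \<noteq> b" for c
  proof
    assume "subseq [c,b,c] (b#u)"
    then have "subseq [c,b,c] u" using that by simp
    then show False using bu by (auto dest!: subseq_set)
  qed
  have A: "avoid ((b # u) @ G)"
    unfolding avoid_def
  proof (intro allI impI notI)
    fix a c :: nat assume ac: "a \<noteq> c" and s: "subseq [a,c,a,c] ((b # u) @ G)"
    obtain p q where pq: "[a,c,a,c] = p @ q" "subseq p (b#u)" "subseq q G"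
      using subseq_appendE[OF s] by blast
    have "p = [] \<or> p = [a] \<or> p = [a,c] \<or> p = [a,c,a] \<or> p = [a,c,a,c]"
      using pq(1) by (auto simp: Cons_eq_append_conv)
    then show False
    proof (elim disjE)
      assume "p = []" then show False using pq IH(1) ac unfolding avoid_def by auto
    next
      assume "p = [a]" then have "q = [c,a,c]" using pq by auto
      show False
      proof (cases "a = b")
        case True then show ?thesis using IH(2)[of c] ac pq \<open>q = [c,a,c]\<close> by auto
      next
        case False then show ?thesis using pq \<open>p = [a]\<close> \<open>q = [c,a,c]\<close> disj
          by (auto split: if_splits dest!: subseq_set)
      qed
    next
      assume "p = [a,c]" then have "q = [a,c]" using pq by auto
      then show False using pq \<open>p = [a,c]\<close> disj ac by (auto split: if_splits dest!: subseq_set)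
    next
      assume "p = [a,c,a]" then have "q = [c]" using pq by auto
      show False
      proof (cases "c = b")
        case True then show ?thesis using nb[of a] ac pq \<open>p = [a,c,a]\<close> by auto
      next
        case False then show ?thesis using pq \<open>p = [a,c,a]\<close> \<open>q = [c]\<close> disj
          by (auto split: if_splits dest!: subseq_set)
      qed
    next
      assume "p = [a,c,a,c]" then show False using pq abu ac unfolding avoid_def by auto
    qed
  qed
  have B: "\<not> subseq [c,b,c] ((b # u) @ G)" if cb: "c \<noteq> b" for c
  proof
    assume s: "subseq [c,b,c] ((b # u) @ G)"
    obtain p q where pq: "[c,b,c] = p @ q" "subseq p (b#u)" "subseq q G"
      using subseq_appendE[OF s] by blast
    have "p = [] \<or> p = [c] \<or> p = [c,b] \<or> p = [c,b,c]"
      using pq(1) by (auto simp: Cons_eq_append_conv)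
    then show False
    proof (elim disjE)
      assume "p = []" then show False using pq IH(2)[OF cb] by auto
    next
      assume "p = [c]" then have "q = [b,c]" using pq by auto
      then show False using pq \<open>p = [c]\<close> disj cb by (auto dest!: subseq_set)
    next
      assume "p = [c,b]" then have "q = [c]" using pq by auto
      then show False using pq \<open>p = [c,b]\<close> disj cb by (auto dest!: subseq_set)
    next
      assume "p = [c,b,c]" then show False using pq nb[OF cb] by auto
    qed
  qed
  show ?case using A B eq by simp
qed

lemma psi_avoid: "distinct (labels T) \<Longrightarrow> avoid (psi T)"
proof (induct T)
  case Leaf then show ?case by (simp add: avoid_Nil)
next
  case (Node b ts)
  have d: "distinct (concat (map labels ts))" "b \<notin> set (concat (map labels ts))"
    using Node.prems by auto
  have "\<forall>t\<in>set ts. distinct (labels t)" using d(1) by (auto simp: distinct_concat_iff)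
  then have "\<forall>t\<in>set ts. avoid (psi t)" using Node.hyps by auto
  from psi_avoid_list[OF this d] have "avoid (b # psi (Node b ts))" by simp
  then show ?case using avoid_appendD[of "[b]"] by simp
qed


lemma split_unique:
  "b \<notin> set u \<Longrightarrow> b \<notin> set u' \<Longrightarrow> u @ b # r = u' @ b # r' \<Longrightarrow> u = u' \<and> r = r'"
proof (induct u arbitrary: u')
  case Nil then show ?case by (cases u') auto
next
  case (Cons x xs) then show ?case by (cases u') auto
qed

lemma psi_Node_last:
  assumes "k \<ge> 1" "is_kary k (Node b ts)"
  shows "psi (Node b ts) \<noteq> [] \<and> last (psi (Node b ts)) = b"
proof -
  have "ts \<noteq> []" using assms by auto
  then obtain ts0 t where "ts = ts0 @ [t]" by (metis rev_exhaust)
  then show ?thesis by simp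
qed

lemma list_inj:
  assumes "\<forall>t\<in>set ts. b \<notin> set (psi t) \<and> (\<forall>t'\<in>set ts'. psi t = psi t' \<longrightarrow> t = t')"
    "\<forall>t'\<in>set ts'. b \<notin> set (psi t')" "length ts = length ts'"
    "concat (map (\<lambda>t. psi t @ [b]) ts) = concat (map (\<lambda>t. psi t @ [b]) ts')"
  shows "ts = ts'"
  using assms
proof (induct ts arbitrary: ts')
  case Nil then show ?case by simp
next
  case (Cons t ts)
  then obtain t' ts'' where ts': "ts' = t' # ts''" by (cases ts') auto
  have "psi t = psi t' \<and> concat (map (\<lambda>t. psi t @ [b]) ts) = concat (map (\<lambda>t. psi t @ [b]) ts'')"
    using split_unique[of b "psi t" "psi t'"] Cons.prems ts' by auto
  then show ?case using Cons ts' by auto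
qed

lemma psi_inj:
  "k \<ge> 1 \<Longrightarrow> is_kary k T1 \<Longrightarrow> distinct (labels T1) \<Longrightarrow> is_kary k T2 \<Longrightarrow> distinct (labels T2)
   \<Longrightarrow> psi T1 = psi T2 \<Longrightarrow> T1 = T2"
proof (induct T1 arbitrary: T2)
  case Leaf
  then show ?case by (cases T2) (use psi_Node_last in auto)
next
  case (Node b ts)
  then obtain b' ts' where T2: "T2 = Node b' ts'"
    by (cases T2) (use psi_Node_last in fastforce)+
  have "b = b'" using psi_Node_last[of k b ts] psi_Node_last[of k b' ts'] Node.prems T2 by auto
  have d1: "\<forall>t\<in>set ts. distinct (labels t)" "b \<notin> set (concat (map labels ts))"
    using Node.prems by (auto simp: distinct_concat_iff)
  have d2: "\<forall>t\<in>set ts'. distinct (labels t) \<and> is_kary k t" "b \<notin> set (concat (map labels ts'))"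
    using Node.prems T2 \<open>b = b'\<close> by (auto simp: distinct_concat_iff)
  have "ts = ts'"
  proof (rule list_inj[of ts b ts'])
    show "\<forall>t\<in>set ts. b \<notin> set (psi t) \<and> (\<forall>t'\<in>set ts'. psi t = psi t' \<longrightarrow> t = t')"
      using Node.hyps Node.prems d1 d2 set_psi by fastforce
    show "\<forall>t'\<in>set ts'. b \<notin> set (psi t')" using d2 set_psi by fastforce
    show "length ts = length ts'" using Node.prems T2 by auto
    show "concat (map (\<lambda>t. psi t @ [b]) ts) = concat (map (\<lambda>t. psi t @ [b]) ts')"
      using Node.prems T2 \<open>b = b'\<close> by simp
  qed
  then show ?case using T2 \<open>b = b'\<close> by simp
qed

definition seg :: "nat \<Rightarrow> nat list list \<Rightarrow> nat list" where
  "seg b us = concat (map (\<lambda>u. u @ [b]) us)"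

lemma seg_Nil[simp]: "seg b [] = []" and seg_Cons[simp]: "seg b (u # us) = u @ b # seg b us"
  by (simp_all add: seg_def)

lemma set_seg: "set (seg b us) = set (concat us) \<union> (if us = [] then {} else {b})"
  by (induct us) auto

lemma decomp: "w = [] \<or> last w = b \<Longrightarrow> \<exists>us. w = seg b us \<and> (\<forall>u\<in>set us. b \<notin> set u)"
proof (induct w rule: length_induct)
  case (1 w)
  show ?case
  proof (cases "w = []")
    case True then show ?thesis by (intro exI[of _ "[]"]) simp
  next
    case False
    then have "b \<in> set w" using 1(2) last_in_set by fastforce
    then obtain u r where w: "w = u @ b # r" "b \<notin> set u" by (meson split_list_first)
    have "r = [] \<or> last r = b" using 1(2) w False by (cases "r = []") auto
    moreover have "length r < length w" using w by simp
    ultimately obtain us where "r = seg b us" "\<forall>u\<in>set us. b \<notin> set u" using 1(1) by blast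
    then show ?thesis using w by (intro exI[of _ "u # us"]) simp
  qed
qed

lemma seg_ab: "a \<in> set (seg b us) \<Longrightarrow> a \<noteq> b \<Longrightarrow> subseq [a,b] (seg b us)"
proof (induct us)
  case Nil then show ?case by simp
next
  case (Cons u us)
  show ?case
  proof (cases "a \<in> set u")
    case True
    then have "subseq [a] u" by (simp add: subseq_singleton_left)
    then have "subseq ([a] @ [b]) (u @ [b] @ seg b us)"
      by (metis list_emb_append_mono subseq_order.order_refl subseq_rev_drop_many append_assoc)
    then show ?thesis by simp
  next
    case False
    then have "subseq [a,b] (seg b us)" using Cons by auto
    then have "subseq [a,b] ((u @ [b]) @ seg b us)" by (rule subseq_drop_many)
    then show ?thesis by simp
  qed
qed

lemma count_seg_b: "\<forall>u\<in>set us. b \<notin> set u \<Longrightarrow> count (mset (seg b us)) b = length us"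
  by (induct us) auto

lemma length_seg: "u \<in> set us \<Longrightarrow> length u < length (seg b us)"
  by (induct us) auto

definition Q :: "nat \<Rightarrow> nat list \<Rightarrow> bool" where
  "Q k u = ((\<forall>a\<in>set u. count (mset u) a = k) \<and> avoid u)"

definition P :: "nat \<Rightarrow> nat list \<Rightarrow> ktree \<Rightarrow> bool" where
  "P k u t = (is_kary k t \<and> distinct (labels t) \<and> set (labels t) = set u \<and> psi t = u)"

lemma build:
  assumes "avoid (seg b us)" "\<forall>u\<in>set us. b \<notin> set u"
    "\<forall>a\<in>set (seg b us). a \<noteq> b \<longrightarrow> count (mset (seg b us)) a = k"
    "\<forall>u\<in>set us. Q k u \<longrightarrow> (\<exists>t. P k u t)"
  shows "\<exists>ts. map psi ts = us \<and> (\<forall>t\<in>set ts. is_kary k t) \<and> distinct (concat (map labels ts))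
     \<and> set (concat (map labels ts)) = set (concat us)"
  using assms
proof (induct us)
  case Nil then show ?case by (intro exI[of _ "[]"]) simp
next
  case (Cons u us)
  define S where "S = seg b us"
  have eq: "seg b (u # us) = u @ b # S" unfolding S_def by simp
  have au: "avoid u" and abS: "avoid (b # S)" using Cons.prems(1) eq avoid_appendD by metis+
  have aS: "avoid S" using abS avoid_appendD[of "[b]" S] by simp
  have bu: "b \<notin> set u" using Cons.prems(2) by simp
  have disj: "a \<notin> set S" if "a \<in> set u" for a
  proof
    assume aS: "a \<in> set S"
    have ab: "a \<noteq> b" using that bu by auto
    have "subseq [a,b] S" using seg_ab aS ab unfolding S_def by blast
    then have 2: "subseq [b,a,b] (b # S)" by simp
    have 1: "subseq [a] u" using that by (simp add: subseq_singleton_left)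
    have "subseq ([a] @ [b,a,b]) (u @ b # S)" by (rule list_emb_append_mono[OF 1 2])
    then show False using Cons.prems(1) eq ab unfolding avoid_def by auto
  qed
  have Qu: "Q k u" unfolding Q_def
  proof (intro conjI ballI au)
    fix a assume a: "a \<in> set u"
    then have "count (mset (seg b (u # us))) a = k" using Cons.prems(3) bu by auto
    then show "count (mset u) a = k" using eq disj[OF a] bu a by auto
  qed
  then obtain t where t: "P k u t" using Cons.prems(4) by auto
  have "\<forall>a\<in>set S. a \<noteq> b \<longrightarrow> count (mset S) a = k"
  proof (intro ballI impI)
    fix a assume a: "a \<in> set S" "a \<noteq> b"
    then have "a \<notin> set u" using disj by blast
    moreover have "count (mset (seg b (u # us))) a = k" using Cons.prems(3) a eq by auto
    moreover have "count (mset u) a = 0" using calculation(1) by simp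
    ultimately show "count (mset S) a = k" using eq a by simp
  qed
  then obtain ts where ts: "map psi ts = us" "\<forall>t\<in>set ts. is_kary k t" "distinct (concat (map labels ts))"
     "set (concat (map labels ts)) = set (concat us)"
    using Cons.hyps aS Cons.prems(2,4) unfolding S_def by auto
  have "set (concat us) \<subseteq> set S" unfolding S_def set_seg by auto
  then have "set (labels t) \<inter> set (concat (map labels ts)) = {}"
    using t ts(4) disj unfolding P_def by blast
  then show ?case using t ts unfolding P_def
    by (intro exI[of _ "t # ts"]) auto
qed

lemma surj_main: "k \<ge> 1 \<Longrightarrow> Q k w \<Longrightarrow> \<exists>T. P k w T"
proof (induct "length w" arbitrary: w rule: less_induct)
  case less
  show ?case
  proof (cases "w = []")
    case True then show ?thesis by (intro exI[of _ Leaf]) (simp add: P_def)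
  next
    case False
    define b where "b = last w"
    obtain us where us: "w = seg b us" "\<forall>u\<in>set us. b \<notin> set u"
      using decomp[of w b] b_def by auto
    have une: "us \<noteq> []" using us False by auto
    have bw: "b \<in> set w" using False b_def by simp
    have lk: "length us = k" using count_seg_b[OF us(2)] us(1) less.prems bw unfolding Q_def by auto
    have "\<forall>u\<in>set us. Q k u \<longrightarrow> (\<exists>t. P k u t)"
      using less.hyps less.prems(1) length_seg us(1) by metis
    moreover have "avoid (seg b us)" "\<forall>a\<in>set (seg b us). a \<noteq> b \<longrightarrow> count (mset (seg b us)) a = k"
      using less.prems us(1) unfolding Q_def by auto
    ultimately obtain ts where ts: "map psi ts = us" "\<forall>t\<in>set ts. is_kary k t" "distinct (concat (map labels ts))"
     "set (concat (map labels ts)) = set (concat us)"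
      using build[of b us k] us(2) by blast
    have "P k w (Node b ts)" unfolding P_def
    proof (intro conjI)
      show "is_kary k (Node b ts)" using ts lk by auto
      show "distinct (labels (Node b ts))" using ts us(2) by auto
      show "set (labels (Node b ts)) = set w" using ts us une set_seg[of b us] by auto
      have "psi (Node b ts) = seg b (map psi ts)" by (simp add: seg_def comp_def)
      then show "psi (Node b ts) = w" using ts us by simp
    qed
    then show ?thesis by blast
  qed
qed


theorem theorem4p1:
  fixes k n :: nat
  assumes "k \<ge> 1"
  shows "bij_betw psi (labeled_kary_trees k n) (quasi_stirling k n)"
  unfolding bij_betw_def
proof (intro conjI)
  show "inj_on psi (labeled_kary_trees k n)"
    unfolding inj_on_def labeled_kary_trees_def using psi_inj[OF assms] by blast
  show "psi ` labeled_kary_trees k n = quasi_stirling k n"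
  proof (intro equalityI subsetI)
    fix w assume "w \<in> psi ` labeled_kary_trees k n"
    then obtain T where T: "is_kary k T" "distinct (labels T)" "set (labels T) = {1..n}" "w = psi T"
      unfolding labeled_kary_trees_def by auto
    have c: "count (mset w) a = (if 1 \<le> a \<and> a \<le> n then k else 0)" for a
      using count_psi[OF T(1), of a] T(2,3,4) distinct_count_atmost_1[of "labels T"] by auto
    have "avoid w" using psi_avoid[OF T(2)] T(4) by simp
    then show "w \<in> quasi_stirling k n" unfolding quasi_stirling_def using c avoid_idx by auto
  next
    fix w assume w: "w \<in> quasi_stirling k n"
    have c: "count (mset w) a = (if 1 \<le> a \<and> a \<le> n then k else 0)" for a
      using w unfolding quasi_stirling_def by auto
    have sw: "set w = {1..n}"
    proof (intro equalityI subsetI)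
      fix a assume "a \<in> set w"
      then have "count (mset w) a \<noteq> 0" by simp
      then show "a \<in> {1..n}" using c[of a] by (auto split: if_splits)
    next
      fix a assume "a \<in> {1..n}"
      then have "count (mset w) a \<noteq> 0" using c[of a] assms by auto
      then show "a \<in> set w" by simp
    qed
    have "avoid w" using w avoid_idx unfolding quasi_stirling_def by auto
    then have "Q k w" unfolding Q_def using c sw by auto
    then obtain T where "P k w T" using surj_main[OF assms] by blast
    then show "w \<in> psi ` labeled_kary_trees k n"
      unfolding P_def labeled_kary_trees_def using sw by auto
  qed
qed

end
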